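(* For every integer $k\geq 6$ and every integer $t$ with $(k-1)(k-2)+1\leq t\leq k(k-1)$, we have $rx_3(K_{2,t})=k$.
   Context: An edge coloring of a graph $G$ is any assignment of colors to the edges (adjacent edges may receive the same color). A tree $T$ in an edge-colored graph is a rainbow tree if no two edges of $T$ have the same color. For $S\subseteq V(G)$, an $S$-tree is a subtree of $G$ containing all vertices of $S$. A $3$-rainbow coloring of $G$ is an edge coloring such that for every set $S$ of $3$ vertices of $G$ there is a rainbow $S$-tree in $G$. The $3$-rainbow index $rx_3(G)$ is the minimum number of colors in a $3$-rainbow coloring of $G$. $K_{2,t}$ denotes the complete bipartite graph with parts of sizes $2$ and $t$. *)

theory Defs
  imports Main
begin

definition simple_graph :: "'a set \<Rightarrow> 'a set set \<Rightarrow> bool" where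
  "simple_graph V E \<longleftrightarrow> finite V \<and> (\<forall>e\<in>E. e \<subseteq> V \<and> card e = 2)"

definition is_subgraph :: "'a set \<Rightarrow> 'a set set \<Rightarrow> 'a set \<Rightarrow> 'a set set \<Rightarrow> bool" where
  "is_subgraph VT ET V E \<longleftrightarrow> VT \<subseteq> V \<and> ET \<subseteq> E \<and> (\<forall>e\<in>ET. e \<subseteq> VT)"

definition connected_graph :: "'a set \<Rightarrow> 'a set set \<Rightarrow> bool" where
  "connected_graph VT ET \<longleftrightarrow>
     (\<forall>x\<in>VT. \<forall>y\<in>VT. (\<lambda>a b. {a, b} \<in> ET)\<^sup>*\<^sup>* x y)"

definition has_cycle :: "'a set set \<Rightarrow> bool" where
  "has_cycle ET \<longleftrightarrow> (\<exists>vs. length vs \<ge> 3 \<and> distinct vs \<and>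
     (\<forall>i < length vs. {vs ! i, vs ! ((i + 1) mod length vs)} \<in> ET))"

definition is_tree :: "'a set \<Rightarrow> 'a set set \<Rightarrow> bool" where
  "is_tree VT ET \<longleftrightarrow> VT \<noteq> {} \<and> connected_graph VT ET \<and> \<not> has_cycle ET"

definition is_S_tree :: "'a set \<Rightarrow> 'a set set \<Rightarrow> 'a set \<Rightarrow> 'a set \<Rightarrow> 'a set set \<Rightarrow> bool" where
  "is_S_tree V E S VT ET \<longleftrightarrow> is_subgraph VT ET V E \<and> is_tree VT ET \<and> S \<subseteq> VT"

definition rainbow :: "('a set \<Rightarrow> nat) \<Rightarrow> 'a set set \<Rightarrow> bool" where
  "rainbow c ET \<longleftrightarrow> inj_on c ET"

definition three_rainbow_coloring :: "'a set \<Rightarrow> 'a set set \<Rightarrow> ('a set \<Rightarrow> nat) \<Rightarrow> bool" where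
  "three_rainbow_coloring V E c \<longleftrightarrow>
     (\<forall>S. S \<subseteq> V \<and> card S = 3 \<longrightarrow>
        (\<exists>VT ET. is_S_tree V E S VT ET \<and> rainbow c ET))"

definition rx3 :: "'a set \<Rightarrow> 'a set set \<Rightarrow> nat" where
  "rx3 V E = (LEAST n. \<exists>c. three_rainbow_coloring V E c \<and> card (c ` E) = n)"

definition K2t_V :: "nat \<Rightarrow> (nat + nat) set" where
  "K2t_V t = {Inl 0, Inl 1} \<union> Inr ` {..<t}"

definition K2t_E :: "nat \<Rightarrow> (nat + nat) set set" where
  "K2t_E t = {{Inl i, Inr j} | i j. i < 2 \<and> j < t}"

end

theory Submission
  imports Defs
begin


lemma offdiag_card:
  assumes "finite A"
  shows "card (Sigma A (\<lambda>x. A - {x})) = card A * (card A - 1)"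
proof -
  have "card (Sigma A (\<lambda>x. A - {x})) = (\<Sum>a\<in>A. card (A - {a}))"
    using assms by simp
  also have "\<dots> = (\<Sum>a\<in>A. card A - 1)"
    by (rule sum.cong) (auto simp: assms)
  finally show ?thesis by simp
qed

lemma nu_facts:
  fixes m :: nat
  assumes "3 \<le> m" "\<alpha> < m"
  shows "Suc \<alpha> mod m < m" "Suc \<alpha> mod m \<noteq> \<alpha>"
proof -
  show "Suc \<alpha> mod m < m" using assms by simp
  show "Suc \<alpha> mod m \<noteq> \<alpha>"
  proof (cases "Suc \<alpha> < m")
    case True then show ?thesis by simp
  next
    case False then have "Suc \<alpha> = m" using assms by simp
    then show ?thesis using assms by simp
  qed
qed

lemma nu_two:
  fixes m :: nat
  assumes "3 \<le> m" "\<alpha> < m" "\<beta> < m" "Suc \<alpha> mod m = \<beta>" "Suc \<beta> mod m = \<alpha>"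
  shows False
proof (cases "Suc \<alpha> < m")
  case True
  then have b: "\<beta> = Suc \<alpha>" using assms by simp
  show ?thesis
  proof (cases "Suc \<beta> < m")
    case True then show ?thesis using assms b by simp
  next
    case False then have "Suc \<beta> = m" using assms by simp
    then show ?thesis using assms b by simp
  qed
next
  case False then have "Suc \<alpha> = m" using assms by simp
  then have "\<beta> = 0" using assms by simp
  then have "\<alpha> = 1" using assms by simp
  then show ?thesis using assms \<open>Suc \<alpha> = m\<close> by simp
qed

lemma count_bound:
  fixes a b :: "nat \<Rightarrow> nat" and t m :: nat
  assumes col: "\<And>j. j<t \<Longrightarrow> a j < m \<and> b j < m"
    and sdr: "\<And>i j l. i<t \<Longrightarrow> j<t \<Longrightarrow> l<t \<Longrightarrow> i\<noteq>j \<Longrightarrow> i\<noteq>l \<Longrightarrow> j\<noteq>l \<Longrightarrow>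
        \<exists>x\<in>{a i, b i}. \<exists>y\<in>{a j,b j}. \<exists>z\<in>{a l,b l}. x\<noteq>y \<and> x\<noteq>z \<and> y\<noteq>z"
    and t3: "3 \<le> t"
  shows "t \<le> m*(m-1)"
proof -
  have F1: "\<not> ({a i, b i} \<union> {a j, b j} \<union> {a l, b l} \<subseteq> {p, q})"
    if "i<t" "j<t" "l<t" "i\<noteq>j" "i\<noteq>l" "j\<noteq>l" for i j l p q
    using sdr[OF that] by blast
  have F2: "\<not> ({a i, b i} \<union> {a j, b j} \<subseteq> {p})" if "i<t" "j<t" "i\<noteq>j" for i j p
  proof -
    have "\<exists>l\<in>{0,1,2::nat}. l \<noteq> i \<and> l \<noteq> j" by auto
    then obtain l where l0: "l \<in> {0,1,2::nat}" "l\<noteq>i" "l\<noteq>j" by blast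
    then have l: "l<t" "l\<noteq>i" "l\<noteq>j" using t3 by auto
    show ?thesis using sdr[of i j l] that l by blast
  qed
  have m3: "3 \<le> m"
  proof -
    obtain x y z where xyz: "x \<in> {a 0, b 0}" "y \<in> {a 1, b 1}" "z \<in> {a 2, b 2}" "x\<noteq>y" "x\<noteq>z" "y\<noteq>z"
      using sdr[of 0 1 2] t3 by auto
    have "x < m" "y < m" "z < m" using xyz(1-3) col[of 0] col[of 1] col[of 2] t3 by auto
    then have "card {x,y,z} \<le> card {..<m}" by (intro card_mono) auto
    then show ?thesis using xyz(4-6) by simp
  qed
  define \<nu> where "\<nu> \<alpha> = Suc \<alpha> mod m" for \<alpha>
  define first where "first j \<longleftrightarrow> (\<forall>j'<j. {a j', b j'} \<noteq> {a j, b j})" for j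
  define f where "f j = (if a j = b j then (max (a j) (\<nu> (a j)), min (a j) (\<nu> (a j)))
      else if first j then (min (a j) (b j), max (a j) (b j)) else (max (a j) (b j), min (a j) (b j)))" for j
  define D where "D = Sigma {..<m} (\<lambda>x. {..<m} - {x})"
  have nu: "\<nu> \<alpha> < m" "\<nu> \<alpha> \<noteq> \<alpha>" if "\<alpha> < m" for \<alpha>
    using nu_facts[OF m3 that] by (auto simp: \<nu>_def)
  have img: "f ` {..<t} \<subseteq> D"
  proof
    fix p assume "p \<in> f ` {..<t}"
    then obtain j where j: "j < t" "p = f j" by auto
    show "p \<in> D" using col[OF j(1)] nu[of "a j"] j(2)
      by (auto simp: f_def D_def max_def min_def)
  qed
  have setf: "{fst (f j), snd (f j)} = {a j, b j}" if "a j \<noteq> b j" for j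
    using that by (auto simp: f_def max_def min_def)
  have loopnon: False if "i<t" "j<t" "a i = b i" "a j \<noteq> b j" "f i = f j" for i j
  proof -
    let ?\<alpha> = "a i"
    have na: "\<nu> ?\<alpha> \<noteq> ?\<alpha>" using nu col that(1) by blast
    have fi: "f i = (max ?\<alpha> (\<nu> ?\<alpha>), min ?\<alpha> (\<nu> ?\<alpha>))" using that by (simp add: f_def)
    show False
    proof (cases "first j")
      case True
      then have "f j = (min (a j) (b j), max (a j) (b j))" using that by (simp add: f_def)
      then show False using fi that(4,5) na by (auto simp: max_def min_def split: if_splits)
    next
      case False
      then obtain j' where j': "j' < j" "{a j', b j'} = {a j, b j}" by (auto simp: first_def)
      have mm: "{max x y, min x y} = {x, y}" for x y :: nat by (cases "x \<le> y") (simp_all add: max_def min_def insert_commute)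
      have e1: "{a j, b j} = {?\<alpha>, \<nu> ?\<alpha>}"
        using setf[OF that(4)] that(5) fi mm[of ?\<alpha> "\<nu> ?\<alpha>"] by (metis fst_conv snd_conv)
      have e2: "i \<noteq> j'" using j'(2) that(3,4) by (metis insert_absorb2 doubleton_eq_iff)
      have e3: "i \<noteq> j" using that(3,4) by blast
      have "{a i, b i} \<union> {a j, b j} \<union> {a j', b j'} \<subseteq> {?\<alpha>, \<nu> ?\<alpha>}"
        using e1 j'(2) that(3) by simp
      then show False using F1[of i j j' ?\<alpha> "\<nu> ?\<alpha>"] that(1,2) j'(1) e2 e3 by simp
    qed
  qed
  have inj: "inj_on f {..<t}"
  proof (rule inj_onI, rule ccontr)
    fix i j assume ij: "i \<in> {..<t}" "j \<in> {..<t}" "f i = f j" "i \<noteq> j"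
    then have it: "i < t" "j < t" by auto
    consider (LL) "a i = b i" "a j = b j" | (LN) "a i = b i" "a j \<noteq> b j"
      | (NL) "a i \<noteq> b i" "a j = b j" | (NN) "a i \<noteq> b i" "a j \<noteq> b j" by blast
    then show False
    proof cases
      case LN then show ?thesis using loopnon[of i j] it ij by auto
    next
      case NL then show ?thesis using loopnon[of j i] it ij by auto
    next
      case LL
      show ?thesis
      proof (cases "a i = a j")
        case True then show ?thesis using F2[of i j "a i"] LL it ij by auto
      next
        case False
        have fi: "f i = (max (a i) (\<nu> (a i)), min (a i) (\<nu> (a i)))"
          and fj: "f j = (max (a j) (\<nu> (a j)), min (a j) (\<nu> (a j)))" using LL by (simp_all add: f_def)
        have "{a i, \<nu> (a i)} = {a j, \<nu> (a j)}" using fi fj ij(3) by (auto simp: max_def min_def split: if_splits)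
        then have "\<nu> (a i) = a j" "\<nu> (a j) = a i" using False by (auto simp: doubleton_eq_iff)
        then show ?thesis using nu_two[OF m3, of "a i" "a j"] col it by (auto simp: \<nu>_def)
      qed
    next
      case NN
      have same: "{a i, b i} = {a j, b j}" using setf[of i] setf[of j] NN ij(3) by simp
      have ord1: "fst (f k) < snd (f k)" if "first k" "a k \<noteq> b k" for k
        using that by (auto simp: f_def max_def min_def)
      have ord2: "fst (f k) > snd (f k)" if "\<not> first k" "a k \<noteq> b k" for k
        using that by (auto simp: f_def max_def min_def)
      show ?thesis
      proof (cases "first i"; cases "first j")
        assume "first i" "first j"
        then show False using same ij(4) by (auto simp: first_def dest: not_less_iff_gr_or_eq[THEN iffD1])
      next
        assume "first i" "\<not> first j"
        then show False using ord1[of i] ord2[of j] NN ij(3) by auto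
      next
        assume "\<not> first i" "first j"
        then show False using ord1[of j] ord2[of i] NN ij(3) by auto
      next
        assume "\<not> first i" "\<not> first j"
        then obtain i' j' where i': "i' < i" "{a i', b i'} = {a i, b i}"
          and j': "j' < j" "{a j', b j'} = {a j, b j}" by (auto simp: first_def)
        show False
        proof (cases "i' = j")
          case False
          then show False using F1[of i' i j "a i" "b i"] i' it same ij(4) by auto
        next
          case True
          then have "j' \<noteq> i" using i' j' by auto
          then show False using F1[of j' i j "a i" "b i"] j' it same ij(4) by auto
        qed
      qed
    qed
  qed
  have "card D = m * (m - 1)" unfolding D_def using offdiag_card[of "{..<m}"] by simp
  moreover have "finite D" unfolding D_def by simp
  ultimately show ?thesis using card_inj_on_le[OF inj img] by simp
qed




lemma K2t_E_alt: "K2t_E t = (\<lambda>(i,j). {Inl i, Inr j}) ` ({..<2} \<times> {..<t})"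
  by (auto simp: K2t_E_def)

lemma finite_K2t_E: "finite (K2t_E t)"
  by (simp add: K2t_E_alt)

lemma edge_in: "i < 2 \<Longrightarrow> j < t \<Longrightarrow> {Inl i, Inr j} \<in> K2t_E t"
  by (auto simp: K2t_E_def)

lemma edge_form: "e \<in> K2t_E t \<Longrightarrow> \<exists>i j. i < 2 \<and> j < t \<and> e = {Inl i, Inr j}"
  by (auto simp: K2t_E_def)

lemma incident_edge:
  assumes "is_S_tree (K2t_V t) (K2t_E t) S VT ET" "Inr j \<in> S" "y \<in> S" "y \<noteq> Inr j"
  shows "\<exists>i<2. {Inl i, Inr j} \<in> ET"
proof -
  from assms have conn: "(\<lambda>a b. {a,b} \<in> ET)\<^sup>*\<^sup>* (Inr j) y"
    by (auto simp: is_S_tree_def is_tree_def connected_graph_def)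
  then obtain z where z: "{Inr j, z} \<in> ET" using assms(4)
    by (cases rule: converse_rtranclpE) auto
  then have "{Inr j, z} \<in> K2t_E t" using assms(1) by (auto simp: is_S_tree_def is_subgraph_def)
  then obtain i j' where ij: "{Inr j, z} = {Inl i, Inr j'}" "i<2" by (auto simp: K2t_E_def)
  then have "z = Inl i" by (auto simp: doubleton_eq_iff)
  then show ?thesis using z ij(2) by (auto simp: insert_commute)
qed

lemma lower:
  assumes rc: "three_rainbow_coloring (K2t_V t) (K2t_E t) c" and t3: "3 \<le> t"
  shows "t \<le> card (c ` K2t_E t) * (card (c ` K2t_E t) - 1)"
proof -
  let ?C = "c ` K2t_E t"
  obtain h where h: "bij_betw h ?C {0..<card ?C}"
    using ex_bij_betw_finite_nat finite_K2t_E by blast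
  define a where "a j = h (c {Inl 0, Inr j})" for j
  define b where "b j = h (c {Inl 1, Inr j})" for j
  show ?thesis
  proof (rule count_bound[of t a "card ?C" b])
    fix j assume "j < t"
    then have "c {Inl 0, Inr j} \<in> ?C" "c {Inl 1, Inr j} \<in> ?C" using edge_in by auto
    then show "a j < card ?C \<and> b j < card ?C"
      using bij_betw_apply[OF h] by (auto simp: a_def b_def)
  next
    show "3 \<le> t" by fact
  next
    fix i j l assume ijl: "i<t" "j<t" "l<t" "i\<noteq>j" "i\<noteq>l" "j\<noteq>l"
    define S :: "(nat + nat) set" where "S = {Inr i, Inr j, Inr l}"
    have "S \<subseteq> K2t_V t" using ijl by (auto simp: S_def K2t_V_def)
    moreover have "card S = 3" using ijl by (simp add: S_def)
    ultimately obtain VT ET where T: "is_S_tree (K2t_V t) (K2t_E t) S VT ET" "rainbow c ET"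
      using rc unfolding three_rainbow_coloring_def by blast
    obtain \<sigma>i where si: "\<sigma>i < 2" "{Inl \<sigma>i, Inr i} \<in> ET"
      using incident_edge[OF T(1), of i "Inr j"] ijl by (auto simp: S_def)
    obtain \<sigma>j where sj: "\<sigma>j < 2" "{Inl \<sigma>j, Inr j} \<in> ET"
      using incident_edge[OF T(1), of j "Inr i"] ijl by (auto simp: S_def)
    obtain \<sigma>l where sl: "\<sigma>l < 2" "{Inl \<sigma>l, Inr l} \<in> ET"
      using incident_edge[OF T(1), of l "Inr i"] ijl by (auto simp: S_def)
    have sub: "ET \<subseteq> K2t_E t" using T(1) by (auto simp: is_S_tree_def is_subgraph_def)
    have injc: "inj_on c ET" using T(2) by (simp add: rainbow_def)
    have injh: "inj_on h ?C" using h by (simp add: bij_betw_def)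
    have dist: "{Inl \<sigma>i, Inr i} \<noteq> {Inl \<sigma>j, Inr j}" "{Inl \<sigma>i, Inr i} \<noteq> {Inl \<sigma>l, Inr l}"
      "{Inl \<sigma>j, Inr j} \<noteq> {Inl \<sigma>l, Inr l}" using ijl by (auto simp: doubleton_eq_iff)
    define x where "x = h (c {Inl \<sigma>i, Inr i})"
    define y where "y = h (c {Inl \<sigma>j, Inr j})"
    define z where "z = h (c {Inl \<sigma>l, Inr l})"
    have inC: "c {Inl \<sigma>i, Inr i} \<in> ?C" "c {Inl \<sigma>j, Inr j} \<in> ?C" "c {Inl \<sigma>l, Inr l} \<in> ?C"
      using si sj sl sub by auto
    have "x \<noteq> y" unfolding x_def y_def
      using inj_onD[OF injh _ inC(1) inC(2)] inj_onD[OF injc _ si(2) sj(2)] dist by blast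
    moreover have "x \<noteq> z" unfolding x_def z_def
      using inj_onD[OF injh _ inC(1) inC(3)] inj_onD[OF injc _ si(2) sl(2)] dist by blast
    moreover have "y \<noteq> z" unfolding y_def z_def
      using inj_onD[OF injh _ inC(2) inC(3)] inj_onD[OF injc _ sj(2) sl(2)] dist by blast
    moreover have "x \<in> {a i, b i}" using si(1) by (auto simp: x_def a_def b_def less_2_cases_iff)
    moreover have "y \<in> {a j, b j}" using sj(1) by (auto simp: y_def a_def b_def less_2_cases_iff)
    moreover have "z \<in> {a l, b l}" using sl(1) by (auto simp: z_def a_def b_def less_2_cases_iff)
    ultimately show "\<exists>x\<in>{a i, b i}. \<exists>y\<in>{a j,b j}. \<exists>z\<in>{a l,b l}. x\<noteq>y \<and> x\<noteq>z \<and> y\<noteq>z" by blast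
  qed
qed




lemma mod_plus2_ne:
  fixes n x :: nat
  assumes "3 \<le> n"
  shows "(x + 2) mod n \<noteq> x mod n"
proof
  assume "(x + 2) mod n = x mod n"
  then have "n dvd (x + 2) - x" using mod_eq_dvd_iff_nat[of x "x+2" n] by simp
  then have "n dvd 2" by simp
  then have "n \<le> 2" by (simp add: dvd_imp_le)
  then show False using assms by simp
qed

lemma no_cycle:
  assumes sub: "ET \<subseteq> K2t_E t"
    and uniq: "\<And>j j'. {Inl 0, Inr j} \<in> ET \<Longrightarrow> {Inl 1, Inr j} \<in> ET \<Longrightarrow>
                      {Inl 0, Inr j'} \<in> ET \<Longrightarrow> {Inl 1, Inr j'} \<in> ET \<Longrightarrow> j = j'"
  shows "\<not> has_cycle ET"
proof
  assume "has_cycle ET"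
  then obtain vs where vs: "length vs \<ge> 3" "distinct vs"
    "\<forall>i < length vs. {vs ! i, vs ! ((i + 1) mod length vs)} \<in> ET"
    unfolding has_cycle_def by blast
  define n where "n = length vs"
  have n3: "3 \<le> n" using vs(1) n_def by simp
  define w where "w q = vs ! (q mod n)" for q
  have E: "{w q, w (Suc q)} \<in> ET" for q
  proof -
    have "q mod n < n" using n3 by simp
    then have "{vs ! (q mod n), vs ! ((q mod n + 1) mod n)} \<in> ET" using vs(3) n_def by simp
    then show ?thesis by (simp add: w_def mod_Suc_eq)
  qed
  have inj: "w p = w q \<Longrightarrow> p mod n = q mod n" for p q
  proof -
    assume a: "w p = w q"
    have pos: "0 < length vs" using vs(1) by (cases vs) auto
    have "p mod n < length vs" "q mod n < length vs" using pos unfolding n_def by simp_all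
    then show ?thesis using nth_eq_iff_index_eq[OF vs(2)] a unfolding w_def by blast
  qed
  have Ein: "{w q, w (Suc q)} \<in> K2t_E t" for q using E sub by blast
  have alt1: "\<exists>i. i < 2 \<and> w (Suc q) = Inl i" if "w q = Inr j" for q j
    using Ein[of q] that by (auto simp: K2t_E_def doubleton_eq_iff)
  have alt2: "\<exists>j. w (Suc q) = Inr j" if "w q = Inl i" for q i
    using Ein[of q] that by (auto simp: K2t_E_def doubleton_eq_iff)
  have inr: "\<exists>p j. w p = Inr j"
  proof (cases "w 0")
    case (Inl i) then show ?thesis using alt2 by blast
  next
    case (Inr j) then show ?thesis by blast
  qed
  then obtain p j0 where p: "w p = Inr j0" by blast
  obtain i1 where i1: "i1 < 2" "w (Suc p) = Inl i1" using alt1[OF p] by blast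
  obtain j2 where j2: "w (Suc (Suc p)) = Inr j2" using alt2[OF i1(2)] by blast
  obtain i3 where i3: "i3 < 2" "w (Suc (Suc (Suc p))) = Inl i3" using alt1[OF j2] by blast
  obtain j4 where j4: "w (Suc (Suc (Suc (Suc p)))) = Inr j4" using alt2[OF i3(2)] by blast
  obtain i5 where i5: "i5 < 2" "w (Suc (Suc (Suc (Suc (Suc p))))) = Inl i5" using alt1[OF j4] by blast
  have d13: "i1 \<noteq> i3"
  proof
    assume "i1 = i3"
    then have "w (Suc p) = w (Suc p + 2)" using i1 i3 by simp
    then have "(Suc p + 2) mod n = (Suc p) mod n" using inj by metis
    then show False using mod_plus2_ne[OF n3] by blast
  qed
  have d35: "i3 \<noteq> i5"
  proof
    assume "i3 = i5"
    then have "w (Suc (Suc (Suc p))) = w (Suc (Suc (Suc p)) + 2)" using i5 i3 by simp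
    then have "(Suc (Suc (Suc p)) + 2) mod n = (Suc (Suc (Suc p))) mod n" using inj by metis
    then show False using mod_plus2_ne[OF n3] by blast
  qed
  have e1: "{Inl i1, Inr j2} \<in> ET" using E[of "Suc p"] i1 j2 by simp
  have e3: "{Inl i3, Inr j2} \<in> ET" using E[of "Suc (Suc p)"] i3 j2 by (simp add: insert_commute)
  have e3': "{Inl i3, Inr j4} \<in> ET" using E[of "Suc (Suc (Suc p))"] i3 j4 by simp
  have e5: "{Inl i5, Inr j4} \<in> ET" using E[of "Suc (Suc (Suc (Suc p)))"] i5 j4 by (simp add: insert_commute)
  have both: "{Inl 0, Inr j} \<in> ET \<and> {Inl 1, Inr j} \<in> ET"
    if "{Inl x, Inr j} \<in> ET" "{Inl y, Inr j} \<in> ET" "x < 2" "y < 2" "x \<noteq> y" for x y j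
    using that by (auto simp: less_2_cases_iff)
  have "j2 = j4" using both[OF e1 e3 i1(1) i3(1) d13] both[OF e3' e5 i3(1) i5(1) d35] uniq by blast
  then have "w (Suc (Suc p)) = w (Suc (Suc p) + 2)" using j2 j4 by simp
  then have "(Suc (Suc p) + 2) mod n = (Suc (Suc p)) mod n" using inj by metis
  then show False using mod_plus2_ne[OF n3] by blast
qed

lemma conn_hub:
  assumes "\<And>x. x \<in> VT \<Longrightarrow> (\<lambda>a b. {a,b} \<in> ET)\<^sup>*\<^sup>* h x"
  shows "connected_graph VT ET"
proof -
  let ?R = "\<lambda>a b. {a,b} \<in> ET"
  have symR: "?R\<inverse>\<inverse> = ?R" by (auto simp: fun_eq_iff insert_commute)
  have bk: "?R\<^sup>*\<^sup>* x h" if "x \<in> VT" for x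
    using rtranclp_converseI[OF assms[OF that]] symR by simp
  show ?thesis unfolding connected_graph_def
    using bk assms by (meson rtranclp_trans)
qed

lemma dstar:
  fixes t :: nat and c :: "(nat+nat) set \<Rightarrow> nat" and J :: "nat set" and s :: "nat \<Rightarrow> nat" and m :: nat
  assumes J: "J \<subseteq> {..<t}" and m: "m < t" "m \<notin> J" and s: "\<forall>j\<in>J. s j < 2"
    and cm: "c {Inl 0, Inr m} \<noteq> c {Inl 1, Inr m}"
    and injJ: "inj_on (\<lambda>j. c {Inl (s j), Inr j}) J"
    and avoid: "\<forall>j\<in>J. c {Inl (s j), Inr j} \<noteq> c {Inl 0, Inr m} \<and> c {Inl (s j), Inr j} \<noteq> c {Inl 1, Inr m}"
    and S: "S \<subseteq> {Inl 0, Inl 1} \<union> Inr ` J"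
  shows "\<exists>VT ET. is_S_tree (K2t_V t) (K2t_E t) S VT ET \<and> rainbow c ET"
proof -
  define F where "F j = ({Inl (s j), Inr j} :: (nat+nat) set)" for j
  define VT :: "(nat+nat) set" where "VT = {Inl 0, Inl 1, Inr m} \<union> Inr ` J"
  define ET where "ET = {{Inl 0, Inr m}, {Inl 1, Inr m}} \<union> F ` J"
  let ?R = "\<lambda>a b. {a,b} \<in> ET"
  have sub: "is_subgraph VT ET (K2t_V t) (K2t_E t)"
    unfolding is_subgraph_def
  proof (intro conjI)
    show "VT \<subseteq> K2t_V t" using J m by (auto simp: VT_def K2t_V_def)
    show "ET \<subseteq> K2t_E t" using J m s by (auto simp: ET_def F_def intro: edge_in)
    show "\<forall>e\<in>ET. e \<subseteq> VT" using s by (auto simp: ET_def F_def VT_def less_2_cases_iff)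
  qed
  have r0m: "?R (Inl 0) (Inr m)" by (simp add: ET_def)
  have r01: "?R\<^sup>*\<^sup>* (Inl 0) (Inl 1)"
  proof -
    have "?R (Inr m) (Inl 1)" by (simp add: ET_def insert_commute)
    then show ?thesis using r0m by (meson rtranclp.simps r_into_rtranclp rtranclp_trans)
  qed
  have reach: "?R\<^sup>*\<^sup>* (Inl 0) x" if xv: "x \<in> VT" for x
  proof -
    consider "x = Inl 0" | "x = Inl 1" | "x = Inr m" | j where "j \<in> J" "x = Inr j"
      using xv by (auto simp: VT_def)
    then show ?thesis
    proof cases
      case 1 then show ?thesis by simp
    next
      case 2 then show ?thesis using r01 by simp
    next
      case 3 then show ?thesis using r0m by (metis r_into_rtranclp)
    next
      case 4
      then have ed: "?R (Inl (s j)) (Inr j)" by (auto simp: ET_def F_def)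
      have "s j = 0 \<or> s j = 1" using s 4 by auto
      then show ?thesis
      proof
        assume "s j = 0" then show ?thesis using ed 4 by (metis r_into_rtranclp)
      next
        assume h1: "s j = 1"
        have "?R (Inl 1) (Inr j)" using ed h1 by simp
        then have "?R\<^sup>*\<^sup>* (Inl 0) (Inr j)" by (rule rtranclp.rtrancl_into_rtrancl[OF r01])
        then show ?thesis using 4 by simp
      qed
    qed
  qed
  have conn: "connected_graph VT ET" by (rule conn_hub[OF reach])
  have nc: "\<not> has_cycle ET"
  proof (rule no_cycle[of ET t])
    show "ET \<subseteq> K2t_E t" using sub by (simp add: is_subgraph_def)
  next
    have one: "j = m" if "{Inl 0, Inr j} \<in> ET" "{Inl 1, Inr j} \<in> ET" for j
    proof (rule ccontr)
      assume "j \<noteq> m"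
      then have "{Inl 0, Inr j} \<in> F ` J" "{Inl 1, Inr j} \<in> F ` J" using that
        by (auto simp: ET_def doubleton_eq_iff)
      then have "s j = 0" "s j = 1" by (auto simp: F_def doubleton_eq_iff)
      then show False by simp
    qed
    fix j j' assume "{Inl 0, Inr j} \<in> ET" "{Inl 1, Inr j} \<in> ET" "{Inl 0, Inr j'} \<in> ET" "{Inl 1, Inr j'} \<in> ET"
    then show "j = j'" using one by metis
  qed
  have tree: "is_tree VT ET" using conn nc by (auto simp: is_tree_def VT_def)
  have rb: "rainbow c ET"
    unfolding rainbow_def
  proof (rule inj_onI)
    fix e e' assume ee: "e \<in> ET" "e' \<in> ET" "c e = c e'"
    have Finj: "F j = F j' \<Longrightarrow> j = j'" for j j' by (auto simp: F_def doubleton_eq_iff)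
    have cF: "c (F j) = c {Inl (s j), Inr j}" for j by (simp add: F_def)
    have k1: "e1 = e2" if hh: "e1 \<in> F ` J" "e2 \<in> F ` J" "c e1 = c e2" for e1 e2
    proof -
      obtain j1 j2 where j: "j1 \<in> J" "j2 \<in> J" "e1 = F j1" "e2 = F j2" using hh(1,2) by blast
      then have "c {Inl (s j1), Inr j1} = c {Inl (s j2), Inr j2}" using hh(3) cF by simp
      then have "j1 = j2" using inj_onD[OF injJ _ j(1,2)] by simp
      then show ?thesis using j by simp
    qed
    have k2: "c e1 \<noteq> c {Inl 0, Inr m} \<and> c e1 \<noteq> c {Inl 1, Inr m}" if hh: "e1 \<in> F ` J" for e1
    proof -
      obtain j1 where j: "j1 \<in> J" "e1 = F j1" using hh by blast
      then show ?thesis using avoid cF by simp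
    qed
    have "ET = insert {Inl 0, Inr m} (insert {Inl 1, Inr m} (F ` J))" by (simp add: ET_def)
    then show "e = e'" using ee k1 k2 cm by (metis insertE)
  qed
  have "S \<subseteq> VT" using S by (auto simp: VT_def)
  then show ?thesis using sub tree rb unfolding is_S_tree_def by blast
qed




lemma sdr_nat:
  fixes a1 b1 a2 b2 a3 b3 :: nat
  assumes "a1\<noteq>b1" "a2\<noteq>b2" "a3\<noteq>b3" "(a1,b1)\<noteq>(a2,b2)" "(a1,b1)\<noteq>(a3,b3)" "(a2,b2)\<noteq>(a3,b3)"
  shows "\<exists>x\<in>{a1,b1}. \<exists>y\<in>{a2,b2}. \<exists>z\<in>{a3,b3}. x\<noteq>y \<and> x\<noteq>z \<and> y\<noteq>z"
  using assms by auto

lemma sdr3: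
  fixes A B :: "nat \<Rightarrow> nat"
  assumes ne: "\<forall>j\<in>J. A j \<noteq> B j" and inj: "inj_on (\<lambda>j. (A j, B j)) J"
    and fin: "finite J" and c3: "card J \<le> 3"
  shows "\<exists>s. (\<forall>j\<in>J. s j < (2::nat)) \<and> inj_on (\<lambda>j. if s j = 0 then A j else B j) J"
proof -
  have "card J = 0 \<or> card J = 1 \<or> card J = 2 \<or> card J = 3" using c3 by auto
  then consider "J = {}" | i where "J = {i}" | i j where "J = {i,j}" "i \<noteq> j"
    | i j l where "J = {i,j,l}" "i \<noteq> j" "j \<noteq> l" "i \<noteq> l"
    using fin by (auto simp: card_1_singleton_iff card_2_iff card_3_iff)
  then show ?thesis
  proof cases
    case 1 then show ?thesis by auto
  next
    case 2 then show ?thesis by (intro exI[of _ "\<lambda>_. 0"]) auto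
  next
    case (3 i j)
    show ?thesis
    proof (cases "A i = A j")
      case False then show ?thesis using 3 by (intro exI[of _ "\<lambda>_. 0"]) auto
    next
      case True
      have "(A i, B i) \<noteq> (A j, B j)" using inj 3 by (auto simp: inj_on_def)
      then have "B i \<noteq> B j" using True by auto
      then show ?thesis using 3 by (intro exI[of _ "\<lambda>_. 1"]) auto
    qed
  next
    case (4 i j l)
    have d: "(A i, B i) \<noteq> (A j, B j)" "(A i, B i) \<noteq> (A l, B l)" "(A j, B j) \<noteq> (A l, B l)"
      using inj 4 by (auto simp: inj_on_def)
    obtain x y z where xyz: "x\<in>{A i,B i}" "y\<in>{A j,B j}" "z\<in>{A l,B l}" "x\<noteq>y" "x\<noteq>z" "y\<noteq>z"
      using sdr_nat[OF _ _ _ d] ne 4 by auto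
    define s where "s q = (if q = i then (if x = A i then 0 else 1) else if q = j then (if y = A j then 0 else 1)
       else (if z = A l then 0 else 1::nat))" for q
    have v: "(\<lambda>q. if s q = 0 then A q else B q) i = x" "(\<lambda>q. if s q = 0 then A q else B q) j = y"
      "(\<lambda>q. if s q = 0 then A q else B q) l = z"
      using xyz 4 by (auto simp: s_def)
    have "inj_on (\<lambda>q. if s q = 0 then A q else B q) J"
      unfolding 4(1) inj_on_def using v xyz(4-6) by auto
    moreover have "\<forall>q\<in>J. s q < 2" by (simp add: s_def)
    ultimately show ?thesis by blast
  qed
qed

lemma two_elems:
  assumes "2 \<le> card (A :: nat set)"
  obtains y z where "y \<in> A" "z \<in> A" "y \<noteq> z"
proof -
  have "A \<noteq> {}" using assms by auto
  then obtain y where y: "y \<in> A" by blast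
  have "finite A" using assms card.infinite by fastforce
  then have "card (A - {y}) \<ge> 1" using assms y by simp
  then have "A - {y} \<noteq> {}" by (metis card.empty not_one_le_zero)
  then obtain z where "z \<in> A - {y}" by blast
  then show ?thesis using that y by blast
qed




lemma upper:
  fixes k t :: nat
  assumes k6: "k \<ge> 6" and lo: "(k - 1) * (k - 2) + 1 \<le> t" and hi: "t \<le> k * (k - 1)"
  shows "\<exists>c. three_rainbow_coloring (K2t_V t) (K2t_E t) c \<and> card (c ` K2t_E t) = k"
proof -
  define P1 :: "(nat \<times> nat) set" where "P1 = Sigma {1..<k} (\<lambda>x. {1..<k} - {x})"
  define P0 where "P0 = insert (0,1) P1"
  define Pall :: "(nat \<times> nat) set" where "Pall = Sigma {..<k} (\<lambda>x. {..<k} - {x})"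
  have fP1: "finite P1" by (simp add: P1_def)
  have cP1: "card P1 = (k-1)*(k-2)" using offdiag_card[of "{1..<k}"] by (simp add: P1_def numeral_2_eq_2)
  have cP0: "card P0 = (k-1)*(k-2)+1" using fP1 cP1 by (simp add: P0_def P1_def)
  have fPall: "finite Pall" by (simp add: Pall_def)
  have cPall: "card Pall = k*(k-1)" using offdiag_card[of "{..<k}"] by (simp add: Pall_def)
  have P0sub: "P0 \<subseteq> Pall" using k6 by (auto simp: P0_def P1_def Pall_def)
  have "t - card P0 \<le> card (Pall - P0)"
  proof -
    have "t - card P0 \<le> card Pall - card P0" using hi cPall by (simp add: diff_le_mono)
    then show ?thesis using card_Diff_subset[OF finite_subset[OF P0sub fPall] P0sub] by simp
  qed
  then obtain Q where Q: "Q \<subseteq> Pall - P0" "card Q = t - card P0" "finite Q"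
    by (rule obtain_subset_with_card_n)
  define P where "P = P0 \<union> Q"
  have fP0: "finite P0" using fP1 by (simp add: P0_def)
  have cP: "card P = t" using Q cP0 lo fP0 card_Un_disjoint[OF fP0 Q(3)] by (auto simp: P_def)
  have PPall: "P \<subseteq> Pall" using Q P0sub by (auto simp: P_def)
  have fP: "finite P" using fP0 Q by (simp add: P_def)
  obtain g where g: "bij_betw g {0..<t} P" using ex_bij_betw_nat_finite[OF fP] cP by auto
  have gP: "g j \<in> P" if "j < t" for j using bij_betw_apply[OF g] that by simp
  have gk: "fst (g j) < k \<and> snd (g j) < k \<and> fst (g j) \<noteq> snd (g j)" if "j < t" for j
    using gP[OF that] PPall by (auto simp: Pall_def mem_Times_iff)
  have ginj: "inj_on g {0..<t}" using g by (simp add: bij_betw_def)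
  have gsurj: "\<exists>j<t. g j = p" if "p \<in> P" for p
    using g that unfolding bij_betw_def by (metis atLeastLessThan_iff imageE)
  define c :: "(nat+nat) set \<Rightarrow> nat" where
    "c e = (if Inl 0 \<in> e then fst (g (SOME j. Inr j \<in> e)) else snd (g (SOME j. Inr j \<in> e)))" for e
  have some: "(SOME j'. Inr j' \<in> {Inl i, Inr j}) = j" for i j :: nat
    by (rule some_equality) auto
  have c0: "c {Inl 0, Inr j} = fst (g j)" for j by (simp add: c_def some)
  have c1: "c {Inl 1, Inr j} = snd (g j)" for j using some[of 1 j] by (simp add: c_def)
  have cs: "c {Inl s, Inr j} = (if s = 0 then fst (g j) else snd (g j))" if "s < 2" for s j
    using that c0 c1 by (auto simp: less_2_cases_iff)
  have colors: "c ` K2t_E t = {..<k}"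
  proof
    show "c ` K2t_E t \<subseteq> {..<k}"
    proof
      fix x assume "x \<in> c ` K2t_E t"
      then obtain e where e: "e \<in> K2t_E t" "x = c e" by blast
      then obtain i j where "i < 2" "j < t" "e = {Inl i, Inr j}" using edge_form by blast
      then show "x \<in> {..<k}" using e(2) cs gk by auto
    qed
  next
    show "{..<k} \<subseteq> c ` K2t_E t"
    proof
      fix x assume x: "x \<in> {..<k}"
      obtain y where y: "(x, y) \<in> P0"
      proof (cases "x = 0")
        case True then show ?thesis using that by (auto simp: P0_def)
      next
        case False
        define y where "y = (if x = 1 then 2 else 1::nat)"
        have "(x,y) \<in> P1" using x False k6 by (auto simp: P1_def y_def)
        then show ?thesis using that by (auto simp: P0_def)
      qed
      then obtain j where j: "j < t" "g j = (x, y)" using gsurj by (auto simp: P_def)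
      then have "c {Inl 0, Inr j} = x" using c0 by simp
      moreover have "{Inl 0, Inr j} \<in> K2t_E t" using j edge_in by simp
      ultimately show "x \<in> c ` K2t_E t" by (metis image_eqI)
    qed
  qed
  have rc: "three_rainbow_coloring (K2t_V t) (K2t_E t) c"
    unfolding three_rainbow_coloring_def
  proof (intro allI impI, elim conjE)
    fix S :: "(nat+nat) set" assume SV: "S \<subseteq> K2t_V t" and S3: "card S = 3"
    define J0 where "J0 = {j. Inr j \<in> S}"
    have J0t: "J0 \<subseteq> {..<t}" using SV by (auto simp: J0_def K2t_V_def)
    have fJ0: "finite J0" using J0t finite_subset by blast
    have fS: "finite S" using S3 card.infinite by fastforce
    have "Inr ` J0 \<subseteq> S" by (auto simp: J0_def)
    then have "card ((Inr :: nat \<Rightarrow> nat + nat) ` J0) \<le> card S" using fS by (simp add: card_mono)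
    then have "card ((Inr :: nat \<Rightarrow> nat + nat) ` J0) \<le> 3" using S3 by simp
    then have cJ0: "card J0 \<le> 3" by (simp add: card_image)
    have SJ: "S \<subseteq> {Inl 0, Inl 1} \<union> Inr ` J0"
    proof
      fix x assume "x \<in> S"
      then show "x \<in> {Inl 0, Inl 1} \<union> Inr ` J0" using SV by (auto simp: J0_def K2t_V_def)
    qed
    have ne: "\<forall>j\<in>J0. fst (g j) \<noteq> snd (g j)" using gk J0t by auto
    have injJ0: "inj_on (\<lambda>j. (fst (g j), snd (g j))) J0"
      using inj_on_subset[OF ginj] J0t by (simp add: atLeast0LessThan)
    obtain s where s: "\<forall>j\<in>J0. s j < (2::nat)"
      and sinj: "inj_on (\<lambda>j. if s j = 0 then fst (g j) else snd (g j)) J0"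
      using sdr3[OF ne injJ0 fJ0 cJ0] by blast
    have colS: "c {Inl (s j), Inr j} = (if s j = 0 then fst (g j) else snd (g j))" if "j \<in> J0" for j
      using cs[of "s j" j] s that by simp
    have injc: "inj_on (\<lambda>j. c {Inl (s j), Inr j}) J0"
    proof -
      have "inj_on (\<lambda>j. c {Inl (s j), Inr j}) J0 = inj_on (\<lambda>j. if s j = 0 then fst (g j) else snd (g j)) J0"
        by (rule inj_on_cong) (simp add: colS)
      then show ?thesis using sinj by simp
    qed
    define X where "X = (\<lambda>j. c {Inl (s j), Inr j}) ` J0"
    have cX: "card X \<le> 3" using card_image_le[OF fJ0] cJ0 X_def by (metis order_trans)
    have "card {1..5::nat} - card X \<le> card ({1..5} - X)" by (rule diff_card_le_card_Diff) (simp add: X_def fJ0)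
    then have "2 \<le> card ({1..5::nat} - X)" using cX by simp
    then obtain y z where yz: "y \<in> {1..5::nat} - X" "z \<in> {1..5::nat} - X" "y \<noteq> z"
      by (rule two_elems)
    have "(y, z) \<in> P" using yz k6 by (auto simp: P_def P0_def P1_def)
    then obtain m where m: "m < t" "g m = (y, z)" using gsurj by blast
    have cm0: "c {Inl 0, Inr m} = y" and cm1: "c {Inl 1, Inr m} = z" using c0 c1 m by simp_all
    have mJ: "m \<notin> J0"
    proof
      assume "m \<in> J0"
      then have "c {Inl (s m), Inr m} \<in> X" by (simp add: X_def)
      moreover have "c {Inl (s m), Inr m} = y \<or> c {Inl (s m), Inr m} = z"
        using colS[OF \<open>m \<in> J0\<close>] m by simp
      ultimately show False using yz by auto
    qed
    show "\<exists>VT ET. is_S_tree (K2t_V t) (K2t_E t) S VT ET \<and> rainbow c ET"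
    proof (rule dstar[OF J0t m(1) mJ s])
      show "c {Inl 0, Inr m} \<noteq> c {Inl 1, Inr m}" using cm0 cm1 yz by simp
      show "inj_on (\<lambda>j. c {Inl (s j), Inr j}) J0" by (rule injc)
      show "\<forall>j\<in>J0. c {Inl (s j), Inr j} \<noteq> c {Inl 0, Inr m} \<and> c {Inl (s j), Inr j} \<noteq> c {Inl 1, Inr m}"
      proof
        fix j assume jJ: "j \<in> J0"
        have "c {Inl (s j), Inr j} \<in> X" using jJ by (simp add: X_def)
        then show "c {Inl (s j), Inr j} \<noteq> c {Inl 0, Inr m} \<and> c {Inl (s j), Inr j} \<noteq> c {Inl 1, Inr m}"
          using cm0 cm1 yz by auto
      qed
      show "S \<subseteq> {Inl 0, Inl 1} \<union> Inr ` J0" by (rule SJ)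
    qed
  qed
  show ?thesis using rc colors by auto
qed

theorem lemma6:
  fixes k t :: nat
  assumes "k \<ge> 6"
    and "(k - 1) * (k - 2) + 1 \<le> t"
    and "t \<le> k * (k - 1)"
  shows "rx3 (K2t_V t) (K2t_E t) = k"
  unfolding rx3_def
proof (rule Least_equality)
  show "\<exists>c. three_rainbow_coloring (K2t_V t) (K2t_E t) c \<and> card (c ` K2t_E t) = k"
    by (rule upper[OF assms])
next
  fix n assume "\<exists>c. three_rainbow_coloring (K2t_V t) (K2t_E t) c \<and> card (c ` K2t_E t) = n"
  then obtain c where c: "three_rainbow_coloring (K2t_V t) (K2t_E t) c" "card (c ` K2t_E t) = n" by blast
  have k20: "20 \<le> (k - 1) * (k - 2)"
  proof -
    have "5 * 4 \<le> (k - 1) * (k - 2)" using assms(1) by (intro mult_le_mono) auto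
    then show ?thesis by simp
  qed
  then have t3: "3 \<le> t" using assms(2) by simp
  have tn: "t \<le> n * (n - 1)" using lower[OF c(1) t3] c(2) by simp
  show "k \<le> n"
  proof (rule ccontr)
    assume "\<not> k \<le> n"
    then have "n \<le> k - 1" "n - 1 \<le> k - 2" by auto
    then have "n * (n - 1) \<le> (k - 1) * (k - 2)" by (rule mult_le_mono)
    then show False using tn assms(2) by simp
  qed
qed


end
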